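(* Let $f$ and $g$ be Boolean functions with $var(f)\cap var(g)=\emptyset$, and let $a$ be a truth assignment to a superset of $var(f)\cup var(g)$. Then $\textit{SR}(f\wedge g,a)=\{t\wedge t'\mid t\in\textit{SR}(f,a),\ t'\in\textit{SR}(g,a)\}$.
   Context: A term is a conjunction of literals; $t$ is an implicant of $f$ if $t\models f$, and a prime implicant if no term obtained from $t$ by deleting one literal is an implicant of $f$. $var(f)$ is the set of variables of $f$. For a Boolean function $f$ and an assignment $a$ to a superset of $var(f)$, $\textit{SR}(f,a)$ denotes the set of prime implicants of $f$ that are satisfied by $a$ (the sufficient reasons for $a$ given $f$ when $a$ satisfies $f$). *)

theory Defs
  imports Main
begin

text \<open>Boolean functions over variables of type 'v are predicates on total truth
assignments 'v => bool. A literal is a pair (x, b): x if b, the negation of x otherwise.\<close>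

type_synonym 'v assignment = "'v \<Rightarrow> bool"
type_synonym 'v boolfun = "'v assignment \<Rightarrow> bool"
type_synonym 'v literal = "'v \<times> bool"

definition var :: "'v boolfun \<Rightarrow> 'v set" where
  "var f = {x. \<exists>a. f a \<noteq> f (a(x := \<not> a x))}"

text \<open>A term is a (finite, consistent) conjunction of literals, represented by its set of literals.\<close>
definition is_term :: "'v literal set \<Rightarrow> bool" where
  "is_term t \<longleftrightarrow> finite t \<and> (\<forall>x. \<not> ((x, True) \<in> t \<and> (x, False) \<in> t))"

definition sat_term :: "'v assignment \<Rightarrow> 'v literal set \<Rightarrow> bool" where
  "sat_term a t \<longleftrightarrow> (\<forall>(x, b) \<in> t. a x = b)"

definition implicant :: "'v literal set \<Rightarrow> 'v boolfun \<Rightarrow> bool" where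
  "implicant t f \<longleftrightarrow> is_term t \<and> (\<forall>a. sat_term a t \<longrightarrow> f a)"

definition prime_implicant :: "'v literal set \<Rightarrow> 'v boolfun \<Rightarrow> bool" where
  "prime_implicant t f \<longleftrightarrow> implicant t f \<and> (\<forall>l \<in> t. \<not> implicant (t - {l}) f)"

definition SR :: "'v boolfun \<Rightarrow> 'v assignment \<Rightarrow> 'v literal set set" where
  "SR f a = {t. prime_implicant t f \<and> sat_term a t}"

end

theory Submission
  imports Defs
begin

definition restr :: "'v set \<Rightarrow> 'v literal set \<Rightarrow> 'v literal set" where
  "restr S t = {l \<in> t. fst l \<in> S}"

lemma notvar: "x \<notin> var f \<Longrightarrow> f (a(x := v)) = f a"
proof -
  assume x: "x \<notin> var f"
  show ?thesis
  proof (cases "v = a x")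
    case True then show ?thesis by simp
  next
    case False
    then have "a(x := v) = a(x := \<not> a x)" by auto
    with x show ?thesis unfolding var_def by auto
  qed
qed

lemma finite_mod:
  assumes "finite V" "V \<inter> var f = {}"
  shows "(\<forall>x. x \<notin> V \<longrightarrow> a' x = a x) \<Longrightarrow> f a' = f a"
  using assms
proof (induction V arbitrary: a' rule: finite_induct)
  case empty
  then have "a' = a" by auto
  then show ?case by simp
next
  case (insert x V)
  define a'' where "a'' = a'(x := a x)"
  have "\<forall>y. y \<notin> V \<longrightarrow> a'' y = a y"
    using insert.prems(1) unfolding a''_def by auto
  then have "f a'' = f a"
    using insert.IH[of a''] insert.prems(2) insert.hyps by auto
  moreover have "f a'' = f a'"
    unfolding a''_def using notvar[of x f a' "a x"] insert.prems by auto
  ultimately show ?case by simp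
qed

lemma drop_lit:
  assumes "implicant t f" "x \<notin> var f" "(x, b) \<in> t"
  shows "implicant (t - {(x, b)}) f"
  unfolding implicant_def
proof (intro conjI allI impI)
  show "is_term (t - {(x, b)})" using assms(1) unfolding implicant_def is_term_def by auto
  fix a assume sa: "sat_term a (t - {(x, b)})"
  have "sat_term (a(x := b)) t"
    unfolding sat_term_def
  proof (clarify)
    fix y c assume yc: "(y, c) \<in> t"
    show "(a(x := b)) y = c"
    proof (cases "y = x")
      case True
      have cons: "\<not> ((x, True) \<in> t \<and> (x, False) \<in> t)"
        using assms(1) unfolding implicant_def is_term_def by blast
      have "c = b"
      proof (rule ccontr)
        assume "c \<noteq> b"
        then show False using cons yc True assms(3) by (cases b; cases c) auto
      qed
      then show ?thesis using True by simp
    next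
      case False
      then have "(y, c) \<in> t - {(x, b)}" using yc by auto
      then have "a y = c" using sa unfolding sat_term_def by auto
      then show ?thesis using False by simp
    qed
  qed
  then have "f (a(x := b))" using assms(1) unfolding implicant_def by auto
  then show "f a" using notvar[OF assms(2)] by simp
qed

lemma prime_vars:
  assumes "prime_implicant t f" "(x, b) \<in> t"
  shows "x \<in> var f"
proof (rule ccontr)
  assume "x \<notin> var f"
  then have "implicant (t - {(x, b)}) f"
    using drop_lit[of t f x b] assms unfolding prime_implicant_def by simp
  then show False using assms unfolding prime_implicant_def by auto
qed

lemma var_and: "var (\<lambda>b. f b \<and> g b) \<subseteq> var f \<union> var g"
proof
  fix x assume "x \<in> var (\<lambda>b. f b \<and> g b)"
  then obtain a where h: "(f a \<and> g a) \<noteq> (f (a(x := \<not> a x)) \<and> g (a(x := \<not> a x)))"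
    unfolding var_def by auto
  then have "f a \<noteq> f (a(x := \<not> a x)) \<or> g a \<noteq> g (a(x := \<not> a x))" by blast
  then show "x \<in> var f \<union> var g" unfolding var_def by blast
qed

lemma restr_impl:
  assumes "implicant s (\<lambda>b. f b \<and> g b)"
  shows "implicant (restr (var f) s) f"
  unfolding implicant_def
proof (intro conjI allI impI)
  have ts: "is_term s" using assms unfolding implicant_def by auto
  then show "is_term (restr (var f) s)" unfolding is_term_def restr_def
    by (auto intro: finite_subset)
  fix a assume sa: "sat_term a (restr (var f) s)"
  define V where "V = {x. x \<notin> var f \<and> (\<exists>b. (x, b) \<in> s)}"
  define a' where "a' = (\<lambda>x. if x \<in> V then (x, True) \<in> s else a x)"
  have fV: "finite V"
  proof -
    have "V \<subseteq> fst ` s" unfolding V_def by force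
    moreover have "finite s" using ts unfolding is_term_def by auto
    ultimately show ?thesis by (auto intro: finite_subset)
  qed
  have "sat_term a' s"
    unfolding sat_term_def
  proof (clarify)
    fix x b assume xb: "(x, b) \<in> s"
    show "a' x = b"
    proof (cases "x \<in> var f")
      case True
      then have "x \<notin> V" unfolding V_def by auto
      moreover have "a x = b" using sa xb True unfolding sat_term_def restr_def by auto
      ultimately show ?thesis unfolding a'_def by auto
    next
      case False
      then have "x \<in> V" unfolding V_def using xb by auto
      then show ?thesis unfolding a'_def using ts xb unfolding is_term_def
        by (cases b) auto
    qed
  qed
  then have "f a'" using assms unfolding implicant_def by auto
  moreover have "f a' = f a"
    by (rule finite_mod[OF fV]) (auto simp: V_def a'_def)
  ultimately show "f a" by simp
qed

lemma restr_impl2: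
  assumes "implicant s (\<lambda>b. f b \<and> g b)"
  shows "implicant (restr (var g) s) g"
proof -
  have "(\<lambda>b. f b \<and> g b) = (\<lambda>b. g b \<and> f b)" by auto
  with assms show ?thesis using restr_impl[of s g f] by simp
qed

lemma union_impl:
  assumes "implicant t f" "implicant t' g" "is_term (t \<union> t')"
  shows "implicant (t \<union> t') (\<lambda>b. f b \<and> g b)"
  using assms unfolding implicant_def sat_term_def by auto

theorem proposition14:
  fixes f g :: "'v boolfun" and a :: "'v assignment"
  assumes "finite (var f)" and "finite (var g)"
    and "var f \<inter> var g = {}"
  shows "SR (\<lambda>b. f b \<and> g b) a = {t \<union> t' | t t'. t \<in> SR f a \<and> t' \<in> SR g a}"
proof
  show "SR (\<lambda>b. f b \<and> g b) a \<subseteq> {t \<union> t' | t t'. t \<in> SR f a \<and> t' \<in> SR g a}"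
  proof
    fix t assume "t \<in> SR (\<lambda>b. f b \<and> g b) a"
    then have pt: "prime_implicant t (\<lambda>b. f b \<and> g b)" and st: "sat_term a t"
      unfolding SR_def by auto
    have it: "implicant t (\<lambda>b. f b \<and> g b)" using pt unfolding prime_implicant_def by auto
    have tt: "is_term t" using it unfolding implicant_def by auto
    define tf where "tf = restr (var f) t"
    define tg where "tg = restr (var g) t"
    have teq: "t = tf \<union> tg"
    proof -
      have "\<forall>l\<in>t. fst l \<in> var f \<union> var g"
        using prime_vars[OF pt] var_and[of f g] by fastforce
      then show ?thesis unfolding tf_def tg_def restr_def by auto
    qed
    have itf: "implicant tf f" unfolding tf_def by (rule restr_impl[OF it])
    have itg: "implicant tg g" unfolding tg_def by (rule restr_impl2[OF it])
    have ptf: "prime_implicant tf f"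
      unfolding prime_implicant_def
    proof (intro conjI ballI notI)
      show "implicant tf f" by fact
      fix l assume l: "l \<in> tf" and i: "implicant (tf - {l}) f"
      have "l \<notin> tg" using l assms(3) unfolding tf_def tg_def restr_def by auto
      then have eq: "(tf - {l}) \<union> tg = t - {l}" using teq by auto
      have "is_term (t - {l})" using tt unfolding is_term_def by auto
      then have "implicant (t - {l}) (\<lambda>b. f b \<and> g b)"
        using union_impl[OF i itg] eq by simp
      moreover have "l \<in> t" using l teq by auto
      ultimately show False using pt unfolding prime_implicant_def by auto
    qed
    have ptg: "prime_implicant tg g"
      unfolding prime_implicant_def
    proof (intro conjI ballI notI)
      show "implicant tg g" by fact
      fix l assume l: "l \<in> tg" and i: "implicant (tg - {l}) g"
      have "l \<notin> tf" using l assms(3) unfolding tf_def tg_def restr_def by auto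
      then have eq: "tf \<union> (tg - {l}) = t - {l}" using teq by auto
      have "is_term (t - {l})" using tt unfolding is_term_def by auto
      then have "implicant (t - {l}) (\<lambda>b. f b \<and> g b)"
        using union_impl[OF itf i] eq by simp
      moreover have "l \<in> t" using l teq by auto
      ultimately show False using pt unfolding prime_implicant_def by auto
    qed
    have "sat_term a tf" "sat_term a tg" using st teq unfolding sat_term_def by auto
    then show "t \<in> {t \<union> t' | t t'. t \<in> SR f a \<and> t' \<in> SR g a}"
      using ptf ptg teq unfolding SR_def by blast
  qed
next
  show "{t \<union> t' | t t'. t \<in> SR f a \<and> t' \<in> SR g a} \<subseteq> SR (\<lambda>b. f b \<and> g b) a"
  proof clarify
    fix t t' assume t: "t \<in> SR f a" and t': "t' \<in> SR g a"
    have pt: "prime_implicant t f" and pt': "prime_implicant t' g"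
      and st: "sat_term a t" and st': "sat_term a t'" using t t' unfolding SR_def by auto
    have vt: "\<forall>l\<in>t. fst l \<in> var f" using prime_vars[OF pt] by auto
    have vt': "\<forall>l\<in>t'. fst l \<in> var g" using prime_vars[OF pt'] by auto
    have it: "implicant t f" and it': "implicant t' g"
      using pt pt' unfolding prime_implicant_def by auto
    have tu: "is_term (t \<union> t')"
    proof -
      have "finite (t \<union> t')" using it it' unfolding implicant_def is_term_def by auto
      moreover have "\<not> ((x, True) \<in> t \<union> t' \<and> (x, False) \<in> t \<union> t')" for x
      proof
        assume h: "(x, True) \<in> t \<union> t' \<and> (x, False) \<in> t \<union> t'"
        have c1: "\<not> ((x, True) \<in> t \<and> (x, False) \<in> t)"
          using it unfolding implicant_def is_term_def by blast
        have c2: "\<not> ((x, True) \<in> t' \<and> (x, False) \<in> t')"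
          using it' unfolding implicant_def is_term_def by blast
        have "x \<notin> var f \<or> x \<notin> var g" using assms(3) by auto
        then show False using h c1 c2 vt vt' by fastforce
      qed
      ultimately show ?thesis unfolding is_term_def by blast
    qed
    have iu: "implicant (t \<union> t') (\<lambda>b. f b \<and> g b)" by (rule union_impl[OF it it' tu])
    have rf: "\<And>l. restr (var f) (t \<union> t' - {l}) = t - {l}"
      using vt vt' assms(3) unfolding restr_def by auto
    have rg: "\<And>l. restr (var g) (t \<union> t' - {l}) = t' - {l}"
      using vt vt' assms(3) unfolding restr_def by auto
    have "prime_implicant (t \<union> t') (\<lambda>b. f b \<and> g b)"
      unfolding prime_implicant_def
    proof (intro conjI ballI notI)
      show "implicant (t \<union> t') (\<lambda>b. f b \<and> g b)" by fact
      fix l assume l: "l \<in> t \<union> t'" and i: "implicant (t \<union> t' - {l}) (\<lambda>b. f b \<and> g b)"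
      show False
      proof (cases "l \<in> t")
        case True
        have "implicant (t - {l}) f" using restr_impl[OF i] rf by simp
        then show False using pt True unfolding prime_implicant_def by auto
      next
        case False
        then have "l \<in> t'" using l by auto
        moreover have "implicant (t' - {l}) g" using restr_impl2[OF i] rg by simp
        ultimately show False using pt' unfolding prime_implicant_def by auto
      qed
    qed
    moreover have "sat_term a (t \<union> t')" using st st' unfolding sat_term_def by auto
    ultimately show "t \<union> t' \<in> SR (\<lambda>b. f b \<and> g b) a" unfolding SR_def by auto
  qed
qed

end
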